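(* There are at least $2^{\aleph_0}$ many continuous injective maps $M(\mathbb R(x))\to M(\mathbb R(x,y))$, all of them compatible with restriction and having mutually disjoint images.
   Context: $\mathbb R(x,y)$ is the rational function field in two variables over $\mathbb R$. For a field $K$, $M(K)$ is the set of $\mathbb R$-places $K\to\mathbb R\cup\{\infty\}$, with topology generated by the subbasis $H'(b)=\{\zeta\in M(K)\mid \infty\ne\zeta(b)>0\}$, $b\in K$. A map $\iota:M(\mathbb R(x))\to M(\mathbb R(x,y))$ is compatible with restriction if $\iota(\zeta)|_{\mathbb R(x)}=\zeta$ for all $\zeta$. *)

theory Defs
  imports "HOL-Analysis.Analysis" "HOL-Computational_Algebra.Polynomial" "HOL-Computational_Algebra.Fraction_Field"
begin

text \<open>Values in R \<union> {\<infinity>} are modelled as real option, None standing for \<infinity>.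
  A place in the sense of Lang: zeta 1 = 1, and zeta(a+b) = zeta a + zeta b,
  zeta(ab) = zeta a * zeta b whenever the right-hand side is defined, with the
  conventions c + \<infinity> = \<infinity> (c finite), c * \<infinity> = \<infinity> (c \<noteq> 0),
  \<infinity> * \<infinity> = \<infinity>; \<infinity> + \<infinity> and 0 * \<infinity> are undefined.\<close>

definition is_R_place :: "('a::field \<Rightarrow> real option) \<Rightarrow> bool" where
  "is_R_place \<zeta> \<longleftrightarrow>
     \<zeta> 1 = Some 1 \<and>
     (\<forall>a b c d. \<zeta> a = Some c \<and> \<zeta> b = Some d \<longrightarrow>
        \<zeta> (a + b) = Some (c + d) \<and> \<zeta> (a * b) = Some (c * d)) \<and>
     (\<forall>a b c. \<zeta> a = None \<and> \<zeta> b = Some c \<longrightarrow>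
        \<zeta> (a + b) = None \<and> \<zeta> (b + a) = None \<and>
        (c \<noteq> 0 \<longrightarrow> \<zeta> (a * b) = None \<and> \<zeta> (b * a) = None)) \<and>
     (\<forall>a b. \<zeta> a = None \<and> \<zeta> b = None \<longrightarrow> \<zeta> (a * b) = None)"

definition M :: "('a::field \<Rightarrow> real option) set" where
  "M = {\<zeta>. is_R_place \<zeta>}"

definition H' :: "'a::field \<Rightarrow> ('a \<Rightarrow> real option) set" where
  "H' b = {\<zeta> \<in> M. \<zeta> b \<noteq> None \<and> the (\<zeta> b) > 0}"

definition M_top :: "('a::field \<Rightarrow> real option) topology" where
  "M_top = subtopology (topology_generated_by (range H')) M"

type_synonym Rx = "real poly fract"
type_synonym Rxy = "real poly fract poly fract"

definition incl_xy :: "Rx \<Rightarrow> Rxy" where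
  "incl_xy a = Fract [:a:] 1"

end

theory Submission
  imports Defs
begin

section \<open>Places from valuation-ring data\<close>

lemma place_from_valring:
  fixes V :: "'a::field set" and h :: "'a \<Rightarrow> real"
  assumes one: "1 \<in> V" "h 1 = 1"
    and cl: "\<And>a b. a \<in> V \<Longrightarrow> b \<in> V \<Longrightarrow> a + b \<in> V \<and> a * b \<in> V \<and> h (a+b) = h a + h b \<and> h (a*b) = h a * h b"
    and ng: "\<And>a. a \<in> V \<Longrightarrow> - a \<in> V"
    and iv: "\<And>a. a \<notin> V \<Longrightarrow> inverse a \<in> V \<and> h (inverse a) = 0"
    and iv2: "\<And>b. b \<in> V \<Longrightarrow> h b \<noteq> 0 \<Longrightarrow> inverse b \<in> V"
  shows "is_R_place (\<lambda>a. if a \<in> V then Some (h a) else None)"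
proof -
  have z: "0 \<in> V" using cl[OF one(1) ng[OF one(1)]] by simp
  have h0: "h 0 = 0" using cl[OF z z] by simp
  have A: "a + b \<notin> V \<and> b + a \<notin> V" if "a \<notin> V" "b \<in> V" for a b
  proof -
    have "a = (a + b) + - b" "a = (b + a) + - b" by simp_all
    then show ?thesis using that cl ng by metis
  qed
  have B: "a * b \<notin> V \<and> b * a \<notin> V" if "a \<notin> V" "b \<in> V" "h b \<noteq> 0" for a b
  proof -
    have "b \<noteq> 0" using that h0 by auto
    then have "a = (a * b) * inverse b" "a = (b * a) * inverse b" by simp_all
    then show ?thesis using that cl iv2 by metis
  qed
  have C: "a * b \<notin> V" if "a \<notin> V" "b \<notin> V" for a b
  proof
    assume ab: "a * b \<in> V"
    have "a \<noteq> 0" "b \<noteq> 0" using that z by auto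
    have i: "inverse (a*b) \<in> V" "h (inverse (a*b)) = 0"
      using cl[of "inverse a" "inverse b"] iv[OF that(1)] iv[OF that(2)]
      by (auto simp: mult.commute)
    have "1 = (a*b) * inverse (a*b)" using \<open>a \<noteq> 0\<close> \<open>b \<noteq> 0\<close> by (simp add: field_simps)
    then have "h 1 = h (a*b) * 0" using cl[OF ab i(1)] i(2) by metis
    then show False using one by simp
  qed
  show ?thesis unfolding is_R_place_def
    using one cl A B C by (auto split: if_splits)
qed

context
  fixes \<zeta> :: "'a::field \<Rightarrow> real option"
  assumes P: "is_R_place \<zeta>"
begin

lemma P1: "\<zeta> 1 = Some 1" using P unfolding is_R_place_def by blast

lemma Padd: "\<zeta> a = Some c \<Longrightarrow> \<zeta> b = Some d \<Longrightarrow> \<zeta> (a + b) = Some (c + d)"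
  using P unfolding is_R_place_def by blast

lemma Pmult: "\<zeta> a = Some c \<Longrightarrow> \<zeta> b = Some d \<Longrightarrow> \<zeta> (a * b) = Some (c * d)"
  using P unfolding is_R_place_def by blast

lemma PaddN: "\<zeta> a = None \<Longrightarrow> \<zeta> b = Some c \<Longrightarrow> \<zeta> (a + b) = None \<and> \<zeta> (b + a) = None"
  using P unfolding is_R_place_def by blast

lemma PmultN: "\<zeta> a = None \<Longrightarrow> \<zeta> b = Some c \<Longrightarrow> c \<noteq> 0 \<Longrightarrow> \<zeta> (a * b) = None \<and> \<zeta> (b * a) = None"
  using P unfolding is_R_place_def by blast

lemma PmultNN: "\<zeta> a = None \<Longrightarrow> \<zeta> b = None \<Longrightarrow> \<zeta> (a * b) = None"
  using P unfolding is_R_place_def by blast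

lemma P0: "\<zeta> 0 = Some 0"
proof (cases "\<zeta> 0")
  case None
  then have "\<zeta> (0 + 1) = None" using PaddN P1 by blast
  then show ?thesis using P1 by simp
next
  case (Some c)
  then have "\<zeta> (0 + 0) = Some (c + c)" using Padd by blast
  then show ?thesis using Some by simp
qed

lemma Pneg: "\<zeta> a = Some c \<Longrightarrow> \<zeta> (- a) = Some (- c)"
proof (cases "\<zeta> (-a)")
  case None
  assume "\<zeta> a = Some c"
  then have "\<zeta> (-a + a) = None" using PaddN None by blast
  then show ?thesis using P0 by simp
next
  case (Some e)
  assume "\<zeta> a = Some c"
  then have "\<zeta> (a + - a) = Some (c + e)" using Padd Some by blast
  then have "c + e = 0" using P0 by simp
  then show ?thesis using Some by (simp add: eq_neg_iff_add_eq_0)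
qed

lemma Pinv_inf: "\<zeta> a = None \<Longrightarrow> \<zeta> (inverse a) = Some 0"
proof -
  assume a: "\<zeta> a = None"
  then have "a \<noteq> 0" using P0 by auto
  then have e: "a * inverse a = 1" by simp
  show ?thesis
  proof (cases "\<zeta> (inverse a)")
    case None
    then show ?thesis using PmultNN[OF a None] e P1 by simp
  next
    case (Some d)
    show ?thesis
    proof (cases "d = 0")
      case False
      then show ?thesis using PmultN[OF a Some] e P1 by simp
    qed (use Some in simp)
  qed
qed

lemma Pinv_fin: "\<zeta> b = Some d \<Longrightarrow> d \<noteq> 0 \<Longrightarrow> \<zeta> (inverse b) = Some (inverse d)"
proof -
  assume b: "\<zeta> b = Some d" and d: "d \<noteq> 0"
  then have "b \<noteq> 0" using P0 by auto
  then have e: "b * inverse b = 1" by simp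
  show ?thesis
  proof (cases "\<zeta> (inverse b)")
    case None
    then show ?thesis using PmultN[OF None b d] e P1 by (simp add: mult.commute)
  next
    case (Some f)
    then have "\<zeta> (b * inverse b) = Some (d * f)" using Pmult b by blast
    then have "d * f = 1" using e P1 by simp
    then show ?thesis using Some d by (simp add: field_simps)
  qed
qed

lemma Psq: "\<zeta> (1 + w * w) \<noteq> Some 0"
proof (cases "\<zeta> w")
  case None
  then have "\<zeta> (w*w) = None" using PmultNN by blast
  then show ?thesis using PaddN P1 by fastforce
next
  case (Some d)
  then have "\<zeta> (1 + w*w) = Some (1 + d*d)" using Padd Pmult P1 by blast
  moreover have "1 + d*d \<noteq> 0" by (smt (verit) zero_le_square)
  ultimately show ?thesis by simp
qed

lemma Pnat: "\<zeta> (of_nat n) = Some (real n)"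
proof (induction n)
  case 0 then show ?case using P0 by simp
next
  case (Suc n)
  then have "\<zeta> (1 + of_nat n) = Some (1 + real n)" using Padd P1 by blast
  then show ?case by simp
qed

end


section \<open>The place y -> a of K(y) over K\<close>

definition O1 :: "'k::field \<Rightarrow> 'k poly fract set" where
  "O1 a = {f. \<exists>p q. poly q a \<noteq> 0 \<and> f = Fract p q}"

definition ev :: "'k::field \<Rightarrow> 'k poly fract \<Rightarrow> 'k" where
  "ev a f = (THE v. \<exists>p q. poly q a \<noteq> 0 \<and> f = Fract p q \<and> v = poly p a / poly q a)"

lemma ev_Fract:
  fixes a :: "'k::field"
  assumes "poly q a \<noteq> 0"
  shows "Fract p q \<in> O1 a" "ev a (Fract p q) = poly p a / poly q a"
proof -
  show "Fract p q \<in> O1 a" using assms unfolding O1_def by blast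
  show "ev a (Fract p q) = poly p a / poly q a"
    unfolding ev_def
  proof (rule the_equality)
    show "\<exists>p' q'. poly q' a \<noteq> 0 \<and> Fract p q = Fract p' q' \<and> poly p a / poly q a = poly p' a / poly q' a"
      using assms by blast
  next
    fix v assume "\<exists>p' q'. poly q' a \<noteq> 0 \<and> Fract p q = Fract p' q' \<and> v = poly p' a / poly q' a"
    then obtain p' q' where h: "poly q' a \<noteq> 0" "Fract p q = Fract p' q'" "v = poly p' a / poly q' a"
      by blast
    have "q \<noteq> 0" "q' \<noteq> 0" using assms h(1) by auto
    then have "p * q' = p' * q" using h(2) eq_fract(1) by blast
    then have "poly p a * poly q' a = poly p' a * poly q a" by (metis poly_mult)
    then have "poly p' a / poly q' a = poly p a / poly q a"
      using h(1) assms by (simp add: frac_eq_eq)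
    then show "v = poly p a / poly q a" using h(3) by simp
  qed
qed

lemma O1E:
  assumes "f \<in> O1 a"
  obtains p q where "poly q a \<noteq> 0" "f = Fract p q"
  using assms unfolding O1_def by blast

lemma O1_one: "1 \<in> O1 a" "ev a 1 = 1"
  using ev_Fract[of 1 a 1] by (simp_all add: One_fract_def)

lemma O1_add:
  assumes "f \<in> O1 a" "g \<in> O1 a"
  shows "f + g \<in> O1 a \<and> ev a (f + g) = ev a f + ev a g"
proof -
  obtain p q where f: "poly q a \<noteq> 0" "f = Fract p q" using assms(1) by (rule O1E)
  obtain p' q' where g: "poly q' a \<noteq> 0" "g = Fract p' q'" using assms(2) by (rule O1E)
  have "q \<noteq> 0" "q' \<noteq> 0" using f g by auto
  then have e: "f + g = Fract (p * q' + p' * q) (q * q')" using f g by simp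
  have n: "poly (q * q') a \<noteq> 0" using f g by simp
  have "ev a (f + g) = poly (p * q' + p' * q) a / poly (q * q') a"
    using e ev_Fract(2)[OF n] by simp
  also have "\<dots> = poly p a / poly q a + poly p' a / poly q' a"
    using f(1) g(1) by (simp add: field_simps)
  finally show ?thesis using e ev_Fract[OF n] ev_Fract(2)[OF f(1)] ev_Fract(2)[OF g(1)] f g by simp
qed

lemma O1_mult:
  assumes "f \<in> O1 a" "g \<in> O1 a"
  shows "f * g \<in> O1 a \<and> ev a (f * g) = ev a f * ev a g"
proof -
  obtain p q where f: "poly q a \<noteq> 0" "f = Fract p q" using assms(1) by (rule O1E)
  obtain p' q' where g: "poly q' a \<noteq> 0" "g = Fract p' q'" using assms(2) by (rule O1E)
  have e: "f * g = Fract (p * p') (q * q')" using f g by simp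
  have n: "poly (q * q') a \<noteq> 0" using f g by simp
  have "ev a (f * g) = poly (p * p') a / poly (q * q') a"
    using e ev_Fract(2)[OF n] by simp
  also have "\<dots> = (poly p a / poly q a) * (poly p' a / poly q' a)"
    by simp
  finally show ?thesis using e ev_Fract[OF n] ev_Fract(2)[OF f(1)] ev_Fract(2)[OF g(1)] f g by simp
qed

lemma O1_neg:
  assumes "f \<in> O1 a"
  shows "- f \<in> O1 a"
proof -
  obtain p q where f: "poly q a \<noteq> 0" "f = Fract p q" using assms(1) by (rule O1E)
  then show ?thesis using ev_Fract[of q a "-p"] by simp
qed

lemma reduce_fract:
  fixes a :: "'k::field"
  shows "q \<noteq> 0 \<Longrightarrow> \<exists>p' q'. q' \<noteq> 0 \<and> Fract p q = Fract p' q' \<and> (poly q' a \<noteq> 0 \<or> poly p' a \<noteq> 0 \<or> p' = 0)"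
proof (induction "degree q" arbitrary: p q rule: less_induct)
  case less
  show ?case
  proof (cases "poly q a \<noteq> 0 \<or> poly p a \<noteq> 0 \<or> p = 0")
    case True then show ?thesis using less.prems by blast
  next
    case False
    then have "[:-a,1:] dvd p" "[:-a,1:] dvd q" "p \<noteq> 0" by (auto simp: poly_eq_0_iff_dvd)
    then obtain p1 q1 where pq: "p = [:-a,1:] * p1" "q = [:-a,1:] * q1" by (auto elim!: dvdE)
    have q1: "q1 \<noteq> 0" using pq less.prems by auto
    have "degree q = 1 + degree q1" using pq q1 degree_mult_eq[of "[:-a,1:]" q1] by simp
    then have "degree q1 < degree q" by simp
    from less.hyps[OF this q1, of p1] obtain p' q' where
      h: "q' \<noteq> 0" "Fract p1 q1 = Fract p' q'" "poly q' a \<noteq> 0 \<or> poly p' a \<noteq> 0 \<or> p' = 0" by blast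
    have "[:-a,1:] \<noteq> (0::'k poly)" by simp
    then have "Fract p q = Fract p1 q1" unfolding pq by (rule mult_fract_cancel)
    then show ?thesis using h by metis
  qed
qed

lemma O1_inv:
  fixes a :: "'k::field"
  assumes "f \<notin> O1 a"
  shows "inverse f \<in> O1 a \<and> ev a (inverse f) = 0"
proof -
  obtain p q where f: "f = Fract p q" "q \<noteq> 0" by (cases f)
  from reduce_fract[OF f(2), of p a] obtain p' q' where
    h: "q' \<noteq> 0" "Fract p q = Fract p' q'" "poly q' a \<noteq> 0 \<or> poly p' a \<noteq> 0 \<or> p' = 0" by blast
  have "poly q' a = 0" using assms f h ev_Fract(1) by metis
  moreover have "p' \<noteq> 0"
  proof
    assume "p' = 0"
    then have "f = Fract 0 1" using f h eq_fract(3) by metis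
    then show False using assms ev_Fract(1)[of 1 a 0] by simp
  qed
  ultimately have "poly p' a \<noteq> 0" using h by blast
  moreover have "inverse f = Fract q' p'" using f h by simp
  ultimately show ?thesis using ev_Fract[of p' a q'] \<open>poly q' a = 0\<close> by simp
qed

lemma O1_inv2:
  fixes a :: "'k::field"
  assumes "f \<in> O1 a" "ev a f \<noteq> 0"
  shows "inverse f \<in> O1 a \<and> ev a (inverse f) = inverse (ev a f)"
proof -
  obtain p q where f: "poly q a \<noteq> 0" "f = Fract p q" using assms(1) by (rule O1E)
  have "poly p a \<noteq> 0" using assms(2) f ev_Fract by fastforce
  moreover have "inverse f = Fract q p" using f by simp
  ultimately show ?thesis using ev_Fract[of p a q] ev_Fract[of q a p] f by simp
qed


section \<open>Composite places\<close>

definition iota :: "'k::field \<Rightarrow> ('k \<Rightarrow> real option) \<Rightarrow> ('k poly fract \<Rightarrow> real option)" where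
  "iota a \<zeta> f = (if f \<in> O1 a then \<zeta> (ev a f) else None)"

lemma iota_place:
  fixes a :: "'k::field"
  assumes P: "is_R_place \<zeta>"
  shows "is_R_place (iota a \<zeta>)"
proof -
  define V where "V = {f \<in> O1 a. \<zeta> (ev a f) \<noteq> None}"
  define h where "h f = the (\<zeta> (ev a f))" for f
  have eq: "iota a \<zeta> = (\<lambda>f. if f \<in> V then Some (h f) else None)"
    by (auto simp: iota_def V_def h_def fun_eq_iff)
  have hs: "\<zeta> (ev a f) = Some (h f)" if "f \<in> V" for f
    using that unfolding V_def h_def by auto
  have "is_R_place (\<lambda>f. if f \<in> V then Some (h f) else None)"
  proof (rule place_from_valring)
    show "1 \<in> V" using O1_one[of a] P1[OF P] by (simp add: V_def)
    then show "h 1 = 1" using O1_one[of a] P1[OF P] hs by (simp add: h_def)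
  next
    fix f g assume fg: "f \<in> V" "g \<in> V"
    then have o: "f \<in> O1 a" "g \<in> O1 a" by (auto simp: V_def)
    have s: "\<zeta> (ev a (f+g)) = Some (h f + h g)" "\<zeta> (ev a (f*g)) = Some (h f * h g)"
      using O1_add[OF o] O1_mult[OF o] Padd[OF P hs[OF fg(1)] hs[OF fg(2)]]
        Pmult[OF P hs[OF fg(1)] hs[OF fg(2)]] by auto
    show "f + g \<in> V \<and> f * g \<in> V \<and> h (f + g) = h f + h g \<and> h (f * g) = h f * h g"
      using s O1_add[OF o] O1_mult[OF o] by (simp add: V_def h_def)
  next
    fix f assume f: "f \<in> V"
    have "- f = (-1) * f" by simp
    moreover have m1: "(-1 :: 'k poly fract) = Fract (-1) 1" by (simp add: One_fract_def)
    moreover have "-1 \<in> O1 a" "ev a (-1) = -1" unfolding m1 using ev_Fract[of 1 a "-1"] by simp_all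
    ultimately have "-f \<in> O1 a" "ev a (-f) = - ev a f"
      using O1_mult[of "-1" a f] f by (auto simp: V_def)
    then show "- f \<in> V" using Pneg[OF P hs[OF f]] by (simp add: V_def)
  next
    fix f assume f: "f \<notin> V"
    show "inverse f \<in> V \<and> h (inverse f) = 0"
    proof (cases "f \<in> O1 a")
      case False
      then have "inverse f \<in> O1 a" "ev a (inverse f) = 0" using O1_inv by blast+
      then show ?thesis using P0[OF P] by (simp add: V_def h_def)
    next
      case True
      then have N: "\<zeta> (ev a f) = None" using f by (simp add: V_def)
      then have "ev a f \<noteq> 0" using P0[OF P] by auto
      then have "inverse f \<in> O1 a" "ev a (inverse f) = inverse (ev a f)" using O1_inv2 True by blast+
      then show ?thesis using Pinv_inf[OF P N] by (simp add: V_def h_def)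
    qed
  next
    fix f assume f: "f \<in> V" "h f \<noteq> 0"
    then have "ev a f \<noteq> 0" using hs P0[OF P] by force
    then have "inverse f \<in> O1 a" "ev a (inverse f) = inverse (ev a f)"
      using O1_inv2 f by (auto simp: V_def)
    then show "inverse f \<in> V" using Pinv_fin[OF P hs[OF f(1)] f(2)] by (simp add: V_def)
  qed
  then show ?thesis using eq by simp
qed


definition cst :: "real \<Rightarrow> Rx" where "cst t = Fract [:t:] 1"

lemma cst_add: "cst t + cst u = cst (t + u)" by (simp add: cst_def)
lemma cst_mult: "cst t * cst u = cst (t * u)" by (simp add: cst_def mult.commute)
lemma cst_neg: "- cst t = cst (- t)" by (simp add: cst_def)
lemma cst_one: "cst 1 = 1" by (simp add: cst_def One_fract_def one_pCons)
lemma cst_nat: "cst (real n) = of_nat n" by (simp add: cst_def of_nat_fract of_nat_poly)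

lemma fin_const:
  assumes P: "is_R_place (\<zeta> :: Rx \<Rightarrow> real option)"
  shows "\<zeta> (cst t) \<noteq> None"
proof
  assume N: "\<zeta> (cst t) = None"
  obtain n :: nat where n: "t * t \<le> real n" using real_arch_simple by blast
  define w where "w = sqrt (real n - t * t)"
  have ww: "w * w = real n - t * t" using n unfolding w_def by simp
  define v where "v = cst t"
  define W where "W = cst w"
  have vW: "v * v + W * W = of_nat n"
    unfolding v_def W_def cst_mult cst_add ww cst_nat[symmetric] by simp
  have v0: "v \<noteq> 0" using N P0[OF P] v_def by auto
  have iv: "\<zeta> (inverse v) = Some 0" using Pinv_inf[OF P] N v_def by simp
  define z where "z = W * inverse v"
  have "1 + z * z = (v * v + W * W) * (inverse v * inverse v)"
    using v0 unfolding z_def by (simp add: field_simps)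
  also have "\<dots> = of_nat n * (inverse v * inverse v)" using vW by simp
  finally have e: "1 + z * z = of_nat n * (inverse v * inverse v)" .
  have "\<zeta> (of_nat n * (inverse v * inverse v)) = Some (real n * (0 * 0))"
    using Pmult[OF P] Pnat[OF P] iv by blast
  then have "\<zeta> (1 + z * z) = Some 0" using e by simp
  then show False using Psq[OF P] by blast
qed

lemma topspace_M: "topspace (M_top :: ('a::field \<Rightarrow> real option) topology) = M"
proof -
  have "\<Union> (range (H' :: 'a \<Rightarrow> _)) = M"
  proof
    show "\<Union> (range (H' :: 'a \<Rightarrow> _)) \<subseteq> M" by (auto simp: H'_def)
    show "M \<subseteq> \<Union> (range (H' :: 'a \<Rightarrow> _))"
    proof
      fix \<zeta> :: "'a \<Rightarrow> real option" assume "\<zeta> \<in> M"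
      then have "\<zeta> \<in> H' 1" using P1[of \<zeta>] by (simp add: M_def H'_def)
      then show "\<zeta> \<in> \<Union> (range H')" by blast
    qed
  qed
  then show ?thesis unfolding M_top_def by simp
qed

lemma openin_H': "openin M_top (H' (b :: 'a::field))"
proof -
  have "H' b = H' b \<inter> M" by (auto simp: H'_def)
  moreover have "openin (topology_generated_by (range H')) (H' b)"
    by (rule topology_generated_by_Basis) simp
  ultimately show ?thesis unfolding M_top_def openin_subtopology by blast
qed

lemma iota_M: "\<zeta> \<in> M \<Longrightarrow> iota a \<zeta> \<in> M"
  using iota_place by (auto simp: M_def)

lemma iota_incl: "iota (cst r) \<zeta> (incl_xy b) = \<zeta> b"
  using ev_Fract[of 1 "cst r" "[:b:]"] by (simp add: iota_def incl_xy_def)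

lemma iota_cont: "continuous_map M_top M_top (iota (cst r))"
proof -
  let ?f = "iota (cst r)"
  have "continuous_map M_top (topology_generated_by (range H')) ?f"
  proof (rule continuous_on_generated_topo)
    fix U :: "(Rxy \<Rightarrow> real option) set" assume "U \<in> range H'"
    then obtain b where U: "U = H' b" by blast
    show "openin M_top (?f -` U \<inter> topspace M_top)"
    proof (cases "b \<in> O1 (cst r)")
      case True
      have "?f -` U \<inter> topspace M_top = H' (ev (cst r) b)"
        using True iota_M unfolding U topspace_M by (auto simp: H'_def iota_def)
      then show ?thesis using openin_H' by metis
    next
      case False
      have "?f -` U \<inter> topspace M_top = {}"
        using False unfolding U by (auto simp: H'_def iota_def)
      then show ?thesis by simp
    qed
  next
    show "?f ` topspace M_top \<subseteq> \<Union> (range H')"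
    proof
      fix g assume "g \<in> ?f ` topspace M_top"
      then have "g \<in> M" using iota_M topspace_M by blast
      then have "g \<in> H' 1" using P1[of g] by (simp add: M_def H'_def)
      then show "g \<in> \<Union> (range H')" by blast
    qed
  qed
  moreover have "?f ` topspace M_top \<subseteq> M" using iota_M topspace_M by blast
  ultimately have "continuous_map M_top (subtopology (topology_generated_by (range H')) M) ?f"
    by (intro continuous_map_into_subtopology) auto
  then show ?thesis by (simp add: M_top_def[where 'a=Rxy])
qed

theorem corollary9p3:
  "\<exists>\<iota> :: real \<Rightarrow> (Rx \<Rightarrow> real option) \<Rightarrow> (Rxy \<Rightarrow> real option).
     (\<forall>r. continuous_map M_top M_top (\<iota> r) \<and> inj_on (\<iota> r) M \<and>
          (\<forall>\<zeta>\<in>M. \<iota> r \<zeta> \<circ> incl_xy = \<zeta>)) \<and>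
     (\<forall>r s. r \<noteq> s \<longrightarrow> \<iota> r ` M \<inter> \<iota> s ` M = {})"
proof (intro exI[of _ "\<lambda>r. iota (cst r)"] conjI allI impI)
  fix r
  show "continuous_map M_top M_top (iota (cst r))" by (rule iota_cont)
  show rest: "\<forall>\<zeta>\<in>M. iota (cst r) \<zeta> \<circ> incl_xy = \<zeta>" by (simp add: fun_eq_iff iota_incl)
  show "inj_on (iota (cst r)) M"
  proof (rule inj_onI)
    fix \<zeta> \<zeta>' assume "iota (cst r) \<zeta> = iota (cst r) \<zeta>'"
    then show "\<zeta> = \<zeta>'" by (metis ext iota_incl)
  qed
next
  fix r s :: real assume rs: "r \<noteq> s"
  show "iota (cst r) ` M \<inter> iota (cst s) ` M = {}"
  proof (rule ccontr)
    assume "iota (cst r) ` M \<inter> iota (cst s) ` M \<noteq> {}"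
    then obtain \<zeta> \<zeta>' where z: "\<zeta> \<in> M" "\<zeta>' \<in> M" and eq: "iota (cst r) \<zeta> = iota (cst s) \<zeta>'"
      by blast
    have "\<zeta> = \<zeta>'" by (metis ext iota_incl eq)
    have P: "is_R_place \<zeta>" using z by (simp add: M_def)
    define Y :: Rxy where "Y = Fract [:0,1:] 1"
    have Ya: "iota a \<zeta> Y = \<zeta> a" for a
      using ev_Fract[of 1 a "[:0,1:]"] by (simp add: iota_def Y_def)
    have zz: "\<zeta> (cst r) = \<zeta> (cst s)" using eq Ya \<open>\<zeta> = \<zeta>'\<close> by metis
    obtain e where e: "\<zeta> (cst s) = Some e" using fin_const[OF P] by blast
    have "\<zeta> (cst r + - cst s) = Some (e + - e)"
      using Padd[OF P] Pneg[OF P e] zz e by metis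
    then have d0: "\<zeta> (cst (r - s)) = Some 0" by (simp add: cst_neg cst_add)
    obtain d where d: "\<zeta> (cst (1 / (r - s))) = Some d" using fin_const[OF P] by blast
    have "\<zeta> (cst (r - s) * cst (1 / (r - s))) = Some (0 * d)" using Pmult[OF P d0 d] .
    moreover have "cst (r - s) * cst (1 / (r - s)) = 1" using rs by (simp add: cst_mult cst_one)
    ultimately show False using P1[OF P] by simp
  qed
qed

end
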